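(* Let $A$ be a synaptic algebra and $p,q\in P$. Define $r_p:=p\wedge(p^{\perp}\vee q)\wedge(p^{\perp}\vee q^{\perp})$, $r_{p^{\perp}}:=p^{\perp}\wedge(p\vee q)\wedge(p\vee q^{\perp})$, $r_q:=q\wedge(p\vee q^{\perp})\wedge(p^{\perp}\vee q^{\perp})$, $r_{q^{\perp}}:=q^{\perp}\wedge(p\vee q)\wedge(p^{\perp}\vee q)$, and $[p,q]:=(p\vee q)\wedge(p\vee q^{\perp})\wedge(p^{\perp}\vee q)\wedge(p^{\perp}\vee q^{\perp})$. The following conditions are mutually equivalent: (i) at least one of $r_p=0$, $r_{p^{\perp}}=0$, $r_q=0$, $r_{q^{\perp}}=0$ holds; (ii) $r_p=r_{p^{\perp}}=r_q=r_{q^{\perp}}=0$; (iii) at least one of $pCq$, $pCq^{\perp}$, $p^{\perp}Cq$, $p^{\perp}Cq^{\perp}$ holds; (iv) $pCq$, $pCq^{\perp}$, $p^{\perp}Cq$ and $p^{\perp}Cq^{\perp}$ all hold; (v) $[p,q]=0$.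
   Context: Synaptic algebra (Foulis): $R$ is a real linear associative algebra with unit $1$, and $A\subseteq R$ is a real linear subspace with $1\in A$. For $a,b\in A$ write $aCb$ iff $ab=ba$; $C(a):=\{b\in A: aCb\}$; $CC(a):=\{b\in A: bCd \text{ for all } d\in C(a)\}$. $A$ is a synaptic algebra with enveloping algebra $R$ iff: (SA1) $A$ is a partially ordered archimedean real linear space with positive cone $A^+$, $1$ is an order unit, $\|\cdot\|$ the order-unit norm; (SA2) $a\in A\Rightarrow a^2\in A^+$; (SA3) $a,b\in A^+\Rightarrow aba\in A^+$; (SA4) if $a\in A$, $b\in A^+$, $aba=0$ then $ab=ba=0$; (SA5) if $a\in A^+$ there is $b\in A^+\cap CC(a)$ with $b^2=a$; (SA6) for $a\in A$ there is $p=p^2\in A$ with $ab=0\Leftrightarrow pb=0$ for all $b\in A$; (SA7) if $1\le a$ there is $b\in A$ with $ab=ba=1$; (SA8) if $a,b\in A$, $a_1\le a_2\le\cdots$ are pairwise commuting elements of $C(b)$ with $\|a-a_n\|\to0$, then $a\in C(b)$. $A$ is nondegenerate. $P:=\{p\in A:p=p^2\}$ with the order inherited from $A$ is an orthomodular lattice with orthocomplement $p^{\perp}:=1-p$, meet $\wedge$, join $\vee$. *)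

theory Defs
  imports Complex_Main
begin

text \<open>A synaptic algebra is given by its enveloping real unital associative algebra
  (the type 'r), the subspace A and the positive cone Pos (which determines the order).\<close>

definition sa_le :: "'r::real_algebra_1 set \<Rightarrow> 'r \<Rightarrow> 'r \<Rightarrow> bool" where
  "sa_le Pos a b \<longleftrightarrow> b - a \<in> Pos"

definition commutes :: "'r::real_algebra_1 \<Rightarrow> 'r \<Rightarrow> bool" where
  "commutes a b \<longleftrightarrow> a * b = b * a"

definition Cset :: "'r::real_algebra_1 set \<Rightarrow> 'r \<Rightarrow> 'r set" where
  "Cset A a = {b \<in> A. commutes a b}"

definition CCset :: "'r::real_algebra_1 set \<Rightarrow> 'r \<Rightarrow> 'r set" where
  "CCset A a = {b \<in> A. \<forall>d \<in> Cset A a. commutes b d}"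

definition ou_norm :: "'r::real_algebra_1 set \<Rightarrow> 'r \<Rightarrow> real" where
  "ou_norm Pos a = Inf {l::real. 0 \<le> l \<and> sa_le Pos (- (l *\<^sub>R 1)) a \<and> sa_le Pos a (l *\<^sub>R 1)}"

definition synaptic_algebra :: "'r::real_algebra_1 set \<Rightarrow> 'r set \<Rightarrow> bool" where
  "synaptic_algebra A Pos \<longleftrightarrow>
    \<comment> \<open>A is a real linear subspace of R containing 1\<close>
    0 \<in> A \<and> 1 \<in> A \<and> (\<forall>a\<in>A. \<forall>b\<in>A. a + b \<in> A) \<and> (\<forall>a\<in>A. \<forall>l::real. l *\<^sub>R a \<in> A)
    \<comment> \<open>SA1: partially ordered (positive cone), archimedean, 1 order unit\<close>
    \<and> Pos \<subseteq> A \<and> 0 \<in> Pos \<and> (\<forall>a\<in>Pos. \<forall>b\<in>Pos. a + b \<in> Pos)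
    \<and> (\<forall>a\<in>Pos. \<forall>l::real. 0 \<le> l \<longrightarrow> l *\<^sub>R a \<in> Pos)
    \<and> (\<forall>a. a \<in> Pos \<and> - a \<in> Pos \<longrightarrow> a = 0)
    \<and> (\<forall>a\<in>A. \<forall>b\<in>A. (\<forall>n::nat. sa_le Pos (of_nat n *\<^sub>R a) b) \<longrightarrow> sa_le Pos a 0)
    \<and> (\<forall>a\<in>A. \<exists>n::nat. sa_le Pos a (of_nat n *\<^sub>R 1))
    \<comment> \<open>SA2\<close>
    \<and> (\<forall>a\<in>A. a * a \<in> Pos)
    \<comment> \<open>SA3\<close>
    \<and> (\<forall>a\<in>Pos. \<forall>b\<in>Pos. a * b * a \<in> Pos)
    \<comment> \<open>SA4\<close>
    \<and> (\<forall>a\<in>A. \<forall>b\<in>Pos. a * b * a = 0 \<longrightarrow> a * b = 0 \<and> b * a = 0)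
    \<comment> \<open>SA5\<close>
    \<and> (\<forall>a\<in>Pos. \<exists>b\<in>Pos. b \<in> CCset A a \<and> b * b = a)
    \<comment> \<open>SA6\<close>
    \<and> (\<forall>a\<in>A. \<exists>p\<in>A. p * p = p \<and> (\<forall>b\<in>A. a * b = 0 \<longleftrightarrow> p * b = 0))
    \<comment> \<open>SA7\<close>
    \<and> (\<forall>a\<in>A. sa_le Pos 1 a \<longrightarrow> (\<exists>b\<in>A. a * b = 1 \<and> b * a = 1))
    \<comment> \<open>SA8\<close>
    \<and> (\<forall>a\<in>A. \<forall>b\<in>A. \<forall>s::nat \<Rightarrow> 'r.
         (\<forall>n. s n \<in> Cset A b) \<and> (\<forall>n. sa_le Pos (s n) (s (Suc n)))
         \<and> (\<forall>m n. commutes (s m) (s n))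
         \<and> (\<lambda>n. ou_norm Pos (a - s n)) \<longlonglongrightarrow> 0
         \<longrightarrow> a \<in> Cset A b)
    \<comment> \<open>nondegenerate\<close>
    \<and> (0::'r) \<noteq> 1"

definition projs :: "'r::real_algebra_1 set \<Rightarrow> 'r set" where
  "projs A = {p \<in> A. p * p = p}"

definition pmeet :: "'r::real_algebra_1 set \<Rightarrow> 'r set \<Rightarrow> 'r \<Rightarrow> 'r \<Rightarrow> 'r" where
  "pmeet A Pos p q = (THE r. r \<in> projs A \<and> sa_le Pos r p \<and> sa_le Pos r q
      \<and> (\<forall>s\<in>projs A. sa_le Pos s p \<and> sa_le Pos s q \<longrightarrow> sa_le Pos s r))"

definition pjoin :: "'r::real_algebra_1 set \<Rightarrow> 'r set \<Rightarrow> 'r \<Rightarrow> 'r \<Rightarrow> 'r" where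
  "pjoin A Pos p q = (THE r. r \<in> projs A \<and> sa_le Pos p r \<and> sa_le Pos q r
      \<and> (\<forall>s\<in>projs A. sa_le Pos p s \<and> sa_le Pos q s \<longrightarrow> sa_le Pos r s))"

definition pcomp :: "'r::real_algebra_1 \<Rightarrow> 'r" where
  "pcomp p = 1 - p"

end

theory Submission imports Defs begin

locale sa =
  fixes A Pos :: "'r::real_algebra_1 set"
  assumes SA: "synaptic_algebra A Pos"
begin

lemma ax: "synaptic_algebra A Pos" using SA .
lemmas axu = ax[unfolded synaptic_algebra_def]
lemma A0: "0 \<in> A" using axu by (elim conjE) assumption
lemma A1: "1 \<in> A" using axu by (elim conjE) assumption
lemma Aadd': "\<forall>a\<in>A. \<forall>b\<in>A. a + b \<in> A" using axu by (elim conjE) assumption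
lemma Ascale': "\<forall>a\<in>A. \<forall>l::real. l *\<^sub>R a \<in> A" using axu by (elim conjE) assumption
lemma PosA': "Pos \<subseteq> A" using axu by (elim conjE) assumption
lemma antis': "\<forall>a. a \<in> Pos \<and> - a \<in> Pos \<longrightarrow> a = 0" using axu by (elim conjE) assumption
lemma sq': "\<forall>a\<in>A. a * a \<in> Pos" using axu by (elim conjE) assumption
lemma SA3': "\<forall>a\<in>Pos. \<forall>b\<in>Pos. a * b * a \<in> Pos" using axu by (elim conjE) assumption
lemma SA4': "\<forall>a\<in>A. \<forall>b\<in>Pos. a * b * a = 0 \<longrightarrow> a * b = 0 \<and> b * a = 0" using axu by (elim conjE) assumption
lemma SA6': "\<forall>a\<in>A. \<exists>p\<in>A. p * p = p \<and> (\<forall>b\<in>A. a * b = 0 \<longleftrightarrow> p * b = 0)" using axu by (elim conjE) assumption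
lemma Aadd: "a \<in> A \<Longrightarrow> b \<in> A \<Longrightarrow> a + b \<in> A" using Aadd' by blast
lemma Ascale: "a \<in> A \<Longrightarrow> l *\<^sub>R a \<in> A" using Ascale' by blast
lemma PosA: "x \<in> Pos \<Longrightarrow> x \<in> A" using PosA' by blast
lemma antis: "a \<in> Pos \<Longrightarrow> - a \<in> Pos \<Longrightarrow> a = 0" using antis' by blast
lemma sq: "a \<in> A \<Longrightarrow> a * a \<in> Pos" using sq' by blast
lemma SA3: "a \<in> Pos \<Longrightarrow> b \<in> Pos \<Longrightarrow> a * b * a \<in> Pos" using SA3' by blast
lemma SA4: "a \<in> A \<Longrightarrow> b \<in> Pos \<Longrightarrow> a * b * a = 0 \<Longrightarrow> a * b = 0 \<and> b * a = 0" using SA4' by blast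
lemma SA6: "a \<in> A \<Longrightarrow> \<exists>p\<in>A. p * p = p \<and> (\<forall>b\<in>A. a * b = 0 \<longleftrightarrow> p * b = 0)" using SA6' by blast

lemma Aminus: "a \<in> A \<Longrightarrow> b \<in> A \<Longrightarrow> a - b \<in> A"
proof -
  assume a: "a \<in> A" and b: "b \<in> A"
  have "(-1::real) *\<^sub>R b \<in> A" using Ascale[OF b] .
  then have "a + (-1::real) *\<^sub>R b \<in> A" using Aadd a by blast
  then show ?thesis by simp
qed

lemma projD: "p \<in> projs A \<Longrightarrow> p \<in> A \<and> p * p = p" by (simp add: projs_def)

lemma idem: "p \<in> projs A \<Longrightarrow> p * (p * x) = p * x"
  by (metis projD mult.assoc)

lemma proj_Pos: "p \<in> projs A \<Longrightarrow> p \<in> Pos"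
  by (metis projD sq)

lemma proj_comp: "p \<in> projs A \<Longrightarrow> 1 - p \<in> projs A"
proof -
  assume p: "p \<in> projs A"
  have "(1 - p) * (1 - p) = 1 - p" using projD[OF p] by (simp add: algebra_simps)
  then show ?thesis using projD[OF p] Aminus A1 by (simp add: projs_def)
qed

lemma sum_pos_zero: "x \<in> Pos \<Longrightarrow> y \<in> Pos \<Longrightarrow> x + y = 0 \<Longrightarrow> x = 0"
proof -
  assume "x \<in> Pos" "y \<in> Pos" "x + y = 0"
  then have "- x = y" by (simp add: add_eq_0_iff)
  then show "x = 0" using antis \<open>x \<in> Pos\<close> \<open>y \<in> Pos\<close> by simp
qed

lemma antisym: "sa_le Pos a b \<Longrightarrow> sa_le Pos b a \<Longrightarrow> a = b"
proof -
  assume "sa_le Pos a b" "sa_le Pos b a"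
  then have "b - a \<in> Pos" "- (b - a) \<in> Pos" by (auto simp: sa_le_def)
  then show "a = b" using antis by fastforce
qed

lemma le_comp: "sa_le Pos (1 - a) (1 - b) \<longleftrightarrow> sa_le Pos b a"
  by (simp add: sa_le_def)

lemma rl: assumes p: "p \<in> projs A" and q: "q \<in> projs A" and h: "p * q = p"
  shows "q * p = p"
proof -
  have "(1 - q) * p * (1 - q) = 0" using h by (simp add: algebra_simps)
  then have "(1 - q) * p = 0" using SA4[of "1 - q" p] proj_Pos[OF p] projD[OF proj_comp[OF q]] by blast
  then show ?thesis by (simp add: algebra_simps)
qed

lemma lr: assumes p: "p \<in> projs A" and q: "q \<in> projs A" and h: "q * p = p"
  shows "p * q = p"
proof -
  have "(1 - q) * p * (1 - q) = 0" using h by (simp add: algebra_simps)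
  then have "p * (1 - q) = 0" using SA4[of "1 - q" p] proj_Pos[OF p] projD[OF proj_comp[OF q]] by blast
  then show ?thesis by (simp add: algebra_simps)
qed

lemma le_iff: assumes p: "p \<in> projs A" and q: "q \<in> projs A"
  shows "sa_le Pos p q \<longleftrightarrow> p * q = p"
proof
  assume "sa_le Pos p q"
  then have qp: "q - p \<in> Pos" by (simp add: sa_le_def)
  have c: "(1 - q) * (q - p) * (1 - q) \<in> Pos" using SA3 proj_Pos[OF proj_comp[OF q]] qp by blast
  have "(1 - q) * (q - p) * (1 - q) = - ((1 - q) * p * (1 - q))"
    using projD[OF q] idem[OF q] by (simp add: algebra_simps)
  then have "- ((1 - q) * p * (1 - q)) \<in> Pos" using c by simp
  moreover have "(1 - q) * p * (1 - q) \<in> Pos" using SA3 proj_Pos[OF proj_comp[OF q]] proj_Pos[OF p] by blast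
  ultimately have "(1 - q) * p * (1 - q) = 0" using antis by blast
  then have "p * (1 - q) = 0" using SA4[of "1 - q" p] proj_Pos[OF p] projD[OF proj_comp[OF q]] by blast
  then show "p * q = p" by (simp add: algebra_simps)
next
  assume h: "p * q = p"
  have h2: "q * p = p" using rl[OF p q h] .
  have "(q - p) * (q - p) = q - p" using h h2 projD[OF p] projD[OF q] by (simp add: algebra_simps)
  moreover have "(q - p) * (q - p) \<in> Pos" using sq Aminus projD[OF p] projD[OF q] by blast
  ultimately show "sa_le Pos p q" by (simp add: sa_le_def)
qed

lemma le_iff2: assumes p: "p \<in> projs A" and q: "q \<in> projs A"
  shows "sa_le Pos p q \<longleftrightarrow> q * p = p"
  using le_iff[OF p q] rl[OF p q] lr[OF p q] by blast


definition "isjoin p q r \<longleftrightarrow> r \<in> projs A \<and> sa_le Pos p r \<and> sa_le Pos q r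
      \<and> (\<forall>s\<in>projs A. sa_le Pos p s \<and> sa_le Pos q s \<longrightarrow> sa_le Pos r s)"
definition "ismeet p q r \<longleftrightarrow> r \<in> projs A \<and> sa_le Pos r p \<and> sa_le Pos r q
      \<and> (\<forall>s\<in>projs A. sa_le Pos s p \<and> sa_le Pos s q \<longrightarrow> sa_le Pos s r)"

lemma join_uniq: "isjoin p q r \<Longrightarrow> isjoin p q r' \<Longrightarrow> r = r'"
  unfolding isjoin_def using antisym by blast
lemma meet_uniq: "ismeet p q r \<Longrightarrow> ismeet p q r' \<Longrightarrow> r = r'"
  unfolding ismeet_def using antisym by blast

lemma pjoin_eq: "isjoin p q r \<Longrightarrow> pjoin A Pos p q = r"
  unfolding pjoin_def
  apply (rule the_equality)
   apply (simp add: isjoin_def)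
  using join_uniq unfolding isjoin_def by blast

lemma pmeet_eq: "ismeet p q r \<Longrightarrow> pmeet A Pos p q = r"
  unfolding pmeet_def
  apply (rule the_equality)
   apply (simp add: ismeet_def)
  using meet_uniq unfolding ismeet_def by blast

lemma join_exists: assumes p: "p \<in> projs A" and q: "q \<in> projs A"
  shows "\<exists>r. isjoin p q r"
proof -
  have a: "p + q \<in> A" using Aadd projD p q by blast
  obtain e where e: "e \<in> A" "e * e = e" and eb: "\<forall>b\<in>A. (p + q) * b = 0 \<longleftrightarrow> e * b = 0"
    using SA6[OF a] by blast
  have ep: "e \<in> projs A" using e by (simp add: projs_def)
  have ce: "1 - e \<in> projs A" using proj_comp[OF ep] .
  have "e * (1 - e) = 0" using e by (simp add: algebra_simps)
  then have "(p + q) * (1 - e) = 0" using eb projD[OF ce] by blast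
  then have "(1 - e) * p * (1 - e) + (1 - e) * q * (1 - e) = 0"
    by (metis distrib_left distrib_right mult.assoc mult_zero_right)
  moreover have "(1 - e) * p * (1 - e) \<in> Pos" "(1 - e) * q * (1 - e) \<in> Pos"
    using SA3 proj_Pos ce p q by blast+
  ultimately have z1: "(1 - e) * p * (1 - e) = 0" and z2: "(1 - e) * q * (1 - e) = 0"
    using sum_pos_zero by (blast, metis add.commute)
  have "p * (1 - e) = 0" using SA4[OF projD[OF ce, THEN conjunct1] proj_Pos[OF p] z1] by blast
  then have pe: "sa_le Pos p e" using le_iff[OF p ep] by (simp add: algebra_simps)
  have "q * (1 - e) = 0" using SA4[OF projD[OF ce, THEN conjunct1] proj_Pos[OF q] z2] by blast
  then have qe: "sa_le Pos q e" using le_iff[OF q ep] by (simp add: algebra_simps)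
  have least: "sa_le Pos e s" if s: "s \<in> projs A" "sa_le Pos p s" "sa_le Pos q s" for s
  proof -
    have "p * s = p" "q * s = q" using le_iff p q s by blast+
    then have "(p + q) * (1 - s) = 0" by (simp add: algebra_simps)
    then have "e * (1 - s) = 0" using eb projD[OF proj_comp[OF s(1)]] by blast
    then have "e * s = e" by (simp add: algebra_simps)
    then show ?thesis using le_iff[OF ep s(1)] by simp
  qed
  show ?thesis unfolding isjoin_def using ep pe qe least by blast
qed

lemma pjoin_prop: "p \<in> projs A \<Longrightarrow> q \<in> projs A \<Longrightarrow> isjoin p q (pjoin A Pos p q)"
  using join_exists pjoin_eq by blast

lemma pmeet_dm: assumes p: "p \<in> projs A" and q: "q \<in> projs A"
  shows "ismeet p q (1 - pjoin A Pos (1 - p) (1 - q))"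
proof -
  let ?j = "pjoin A Pos (1 - p) (1 - q)"
  have J: "isjoin (1 - p) (1 - q) ?j" using pjoin_prop proj_comp p q by blast
  have cp: "1 - p \<in> projs A" "1 - q \<in> projs A" using proj_comp p q by blast+
  show ?thesis unfolding ismeet_def
  proof (intro conjI ballI impI)
    show "1 - ?j \<in> projs A" using J proj_comp unfolding isjoin_def by blast
    show "sa_le Pos (1 - ?j) p" using J le_comp[of ?j "1 - p"] unfolding isjoin_def by simp
    show "sa_le Pos (1 - ?j) q" using J le_comp[of ?j "1 - q"] unfolding isjoin_def by simp
  next
    fix s assume s: "s \<in> projs A" "sa_le Pos s p \<and> sa_le Pos s q"
    then have "sa_le Pos (1 - p) (1 - s)" "sa_le Pos (1 - q) (1 - s)" using le_comp by auto
    then have "sa_le Pos ?j (1 - s)" using J proj_comp[OF s(1)] unfolding isjoin_def by blast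
    moreover have "(1 - ?j) - s = (1 - s) - ?j" by (simp add: algebra_simps)
    ultimately show "sa_le Pos s (1 - ?j)" unfolding sa_le_def by metis
  qed
qed

lemma pmeet_eq_dm: "p \<in> projs A \<Longrightarrow> q \<in> projs A \<Longrightarrow> pmeet A Pos p q = 1 - pjoin A Pos (1 - p) (1 - q)"
  using pmeet_dm pmeet_eq by blast

lemma pmeet_prop: "p \<in> projs A \<Longrightarrow> q \<in> projs A \<Longrightarrow> ismeet p q (pmeet A Pos p q)"
  using pmeet_dm pmeet_eq by metis

lemma pjoin_eq_dm: assumes "p \<in> projs A" "q \<in> projs A"
  shows "pjoin A Pos p q = 1 - pmeet A Pos (1 - p) (1 - q)"
  using pmeet_eq_dm[OF proj_comp[OF assms(1)] proj_comp[OF assms(2)]] by simp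

lemma pjoin_comm: "pjoin A Pos p q = pjoin A Pos q p"
  unfolding pjoin_def by (rule arg_cong[where f=The]) auto

lemma pjoin_orth: assumes a: "a \<in> projs A" and b: "b \<in> projs A" and ab: "a * b = 0" and ba: "b * a = 0"
  shows "pjoin A Pos a b = a + b"
proof (rule pjoin_eq)
  have aa: "a * a = a" "b * b = b" using projD a b by blast+
  have "(a + b) * (a + b) = a * a + a * b + b * a + b * b" by (simp add: algebra_simps)
  also have "\<dots> = a + b" using aa ab ba by simp
  finally have sq2: "(a + b) * (a + b) = a + b" .
  have "a + b \<in> A" using Aadd projD a b by blast
  then have P: "a + b \<in> projs A" using sq2 unfolding projs_def by blast
  show "isjoin a b (a + b)" unfolding isjoin_def
  proof (intro conjI ballI impI)
    show "a + b \<in> projs A" using P .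
    have "a * (a + b) = a" using aa ab by (simp add: distrib_left)
    then show "sa_le Pos a (a + b)" using le_iff[OF a P] by simp
    have "(a + b) * b = b" using aa ab by (simp add: distrib_right)
    then show "sa_le Pos b (a + b)" using le_iff2[OF b P] by simp
  next
    fix s assume s: "s \<in> projs A" "sa_le Pos a s \<and> sa_le Pos b s"
    then have "a * s = a" "b * s = b" using le_iff a b by blast+
    then have "(a + b) * s = a + b" by (simp add: distrib_right)
    then show "sa_le Pos (a + b) s" using le_iff[OF P s(1)] by simp
  qed
qed

lemma pmeet_orth: assumes a: "a \<in> projs A" and b: "b \<in> projs A" and ab: "a * b = 0" and ba: "b * a = 0"
  shows "pmeet A Pos (1 - a) (1 - b) = 1 - (a + b)"
  using pmeet_eq_dm[OF proj_comp[OF a] proj_comp[OF b]] pjoin_orth[OF a b ab ba] by simp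

lemma pmeet_comm_prod: assumes a: "a \<in> projs A" and b: "b \<in> projs A" and c: "a * b = b * a"
  shows "pmeet A Pos a b = a * b"
proof (rule pmeet_eq)
  have aa: "a * a = a" "b * b = b" using projD a b by blast+
  have "(a + b) * (a + b) - a - b = a * b + a * b" using aa c by (simp add: algebra_simps)
  then have "a * b = (1/2::real) *\<^sub>R ((a + b) * (a + b) - a - b)"
    by (simp add: scaleR_2[symmetric])
  moreover have "(a + b) * (a + b) - a - b \<in> A" using Aminus Aadd sq PosA projD a b by meson
  ultimately have inA: "a * b \<in> A" using Ascale by simp
  have "(a * b) * (a * b) = a * b"
    by (metis aa c mult.assoc)
  then have P: "a * b \<in> projs A" using inA by (simp add: projs_def)
  show "ismeet a b (a * b)" unfolding ismeet_def
  proof (intro conjI ballI impI)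
    show "a * b \<in> projs A" using P .
    show "sa_le Pos (a * b) a" using le_iff2[OF P a] aa by (simp add: mult.assoc[symmetric])
    show "sa_le Pos (a * b) b" using le_iff[OF P b] aa by (simp add: mult.assoc)
  next
    fix s assume s: "s \<in> projs A" "sa_le Pos s a \<and> sa_le Pos s b"
    then have "s * a = s" "s * b = s" using le_iff a b by blast+
    then show "sa_le Pos s (a * b)" using le_iff[OF s(1) P] by (simp add: mult.assoc[symmetric])
  qed
qed


lemma meetD: assumes p: "p \<in> projs A" and q: "q \<in> projs A"
  shows "pmeet A Pos p q \<in> projs A \<and> pmeet A Pos p q * p = pmeet A Pos p q \<and> p * pmeet A Pos p q = pmeet A Pos p q
     \<and> pmeet A Pos p q * q = pmeet A Pos p q \<and> q * pmeet A Pos p q = pmeet A Pos p q"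
proof -
  have M: "ismeet p q (pmeet A Pos p q)" using pmeet_prop p q by blast
  then have P: "pmeet A Pos p q \<in> projs A" unfolding ismeet_def by blast
  show ?thesis using M le_iff[OF P p] le_iff2[OF P p] le_iff[OF P q] le_iff2[OF P q] P
    unfolding ismeet_def by blast
qed

lemma orth_sum_proj: assumes a: "a \<in> projs A" and b: "b \<in> projs A" and ab: "a * b = 0" and ba: "b * a = 0"
  shows "a + b \<in> projs A"
  using pjoin_prop[OF a b] pjoin_orth[OF a b ab ba] unfolding isjoin_def by simp

lemma rp_formula: assumes p: "p \<in> projs A" and q: "q \<in> projs A"
  shows "pmeet A Pos p (pmeet A Pos (pjoin A Pos (1 - p) q) (pjoin A Pos (1 - p) (1 - q)))
        = p - (pmeet A Pos p (1 - q) + pmeet A Pos p q)"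
proof -
  define u where "u = pmeet A Pos p q"
  define v where "v = pmeet A Pos p (1 - q)"
  have cq: "1 - q \<in> projs A" and cp: "1 - p \<in> projs A" using proj_comp p q by blast+
  have U: "u \<in> projs A" "u * p = u" "p * u = u" "u * q = u" "q * u = u"
    using meetD[OF p q] unfolding u_def by blast+
  have V: "v \<in> projs A" "v * p = v" "p * v = v" "v * (1 - q) = v" "(1 - q) * v = v"
    using meetD[OF p cq] unfolding v_def by blast+
  have h1: "pjoin A Pos (1 - p) q = 1 - v"
    using pjoin_eq_dm[OF cp q] unfolding v_def by simp
  have h2: "pjoin A Pos (1 - p) (1 - q) = 1 - u"
    using pjoin_eq_dm[OF cp cq] unfolding u_def by simp
  have vq: "v * q = 0" using V(4) by (simp add: algebra_simps)
  have qv: "q * v = 0" using V(5) by (simp add: algebra_simps)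
  have vu: "v * u = 0" by (metis U(5) vq mult.assoc mult_zero_left)
  have uv: "u * v = 0" by (metis U(4) qv mult.assoc mult_zero_right)
  have h3: "pmeet A Pos (1 - v) (1 - u) = 1 - (v + u)" using pmeet_orth[OF V(1) U(1) vu uv] .
  have VU: "v + u \<in> projs A" using orth_sum_proj[OF V(1) U(1) vu uv] .
  have o1: "(1 - p) * (v + u) = 0" using V(3) U(3) by (simp add: algebra_simps)
  have o2: "(v + u) * (1 - p) = 0" using V(2) U(2) by (simp add: algebra_simps)
  have h4: "pmeet A Pos (1 - (1 - p)) (1 - (v + u)) = 1 - ((1 - p) + (v + u))"
    using pmeet_orth[OF cp VU o1 o2] .
  have "pmeet A Pos p (pmeet A Pos (pjoin A Pos (1 - p) q) (pjoin A Pos (1 - p) (1 - q)))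
      = 1 - ((1 - p) + (v + u))" using h1 h2 h3 h4 by simp
  also have "\<dots> = p - (v + u)" by (simp add: algebra_simps)
  finally show ?thesis unfolding u_def v_def .
qed

lemma rp_zero_iff: assumes p: "p \<in> projs A" and q: "q \<in> projs A"
  shows "p - (pmeet A Pos p (1 - q) + pmeet A Pos p q) = 0 \<longleftrightarrow> commutes p q"
proof -
  define u where "u = pmeet A Pos p q"
  define v where "v = pmeet A Pos p (1 - q)"
  have cq: "1 - q \<in> projs A" using proj_comp q by blast
  have U: "u \<in> projs A" "u * p = u" "p * u = u" "u * q = u" "q * u = u"
    using meetD[OF p q] unfolding u_def by blast+
  have V: "v \<in> projs A" "v * p = v" "p * v = v" "v * (1 - q) = v" "(1 - q) * v = v"
    using meetD[OF p cq] unfolding v_def by blast+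
  have vq: "v * q = 0" using V(4) by (simp add: algebra_simps)
  have qv: "q * v = 0" using V(5) by (simp add: algebra_simps)
  show ?thesis unfolding u_def[symmetric] v_def[symmetric]
  proof
    assume "p - (v + u) = 0"
    then have pe: "p = v + u" by simp
    have "p * q = u" unfolding pe using vq U(4) by (simp add: distrib_right)
    moreover have "q * p = u" unfolding pe using qv U(5) by (simp add: distrib_left)
    ultimately show "commutes p q" by (simp add: commutes_def)
  next
    assume c: "commutes p q"
    then have c1: "p * q = q * p" by (simp add: commutes_def)
    have c2: "p * (1 - q) = (1 - q) * p" using c1 by (simp add: algebra_simps)
    have "u = p * q" unfolding u_def using pmeet_comm_prod[OF p q c1] .
    moreover have "v = p * (1 - q)" unfolding v_def using pmeet_comm_prod[OF p cq c2] .
    ultimately show "p - (v + u) = 0" by (simp add: algebra_simps)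
  qed
qed

lemma comm_comp: "commutes (1 - p) q \<longleftrightarrow> commutes p q" "commutes p (1 - q) \<longleftrightarrow> commutes p q"
  "commutes q p \<longleftrightarrow> commutes p q"
  unfolding commutes_def by (auto simp: algebra_simps)

lemma rp_iff: "p \<in> projs A \<Longrightarrow> q \<in> projs A \<Longrightarrow>
   pmeet A Pos p (pmeet A Pos (pjoin A Pos (1 - p) q) (pjoin A Pos (1 - p) (1 - q))) = 0 \<longleftrightarrow> commutes p q"
  using rp_formula rp_zero_iff by simp


lemma pjoin_proj: "p \<in> projs A \<Longrightarrow> q \<in> projs A \<Longrightarrow> pjoin A Pos p q \<in> projs A"
  using pjoin_prop unfolding isjoin_def by blast
lemma pmeet_proj: "p \<in> projs A \<Longrightarrow> q \<in> projs A \<Longrightarrow> pmeet A Pos p q \<in> projs A"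
  using meetD by blast

lemma r_proj: assumes p: "p \<in> projs A" and q: "q \<in> projs A"
  shows "p - (pmeet A Pos p (1 - q) + pmeet A Pos p q) \<in> Pos"
proof -
  have "pmeet A Pos p (pmeet A Pos (pjoin A Pos (1 - p) q) (pjoin A Pos (1 - p) (1 - q))) \<in> projs A"
    using pmeet_proj pjoin_proj proj_comp p q by metis
  then show ?thesis using rp_formula[OF p q] proj_Pos by simp
qed

lemma b_formula: assumes p: "p \<in> projs A" and q: "q \<in> projs A"
  shows "pmeet A Pos (pjoin A Pos p q) (pmeet A Pos (pjoin A Pos p (1 - q))
                 (pmeet A Pos (pjoin A Pos (1 - p) q) (pjoin A Pos (1 - p) (1 - q))))
   = (p - (pmeet A Pos p (1 - q) + pmeet A Pos p q)) + ((1 - p) - (pmeet A Pos (1 - p) (1 - q) + pmeet A Pos (1 - p) q))"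
proof -
  define u where "u = pmeet A Pos p q"
  define v where "v = pmeet A Pos p (1 - q)"
  define w where "w = pmeet A Pos (1 - p) q"
  define z where "z = pmeet A Pos (1 - p) (1 - q)"
  have cq: "1 - q \<in> projs A" and cp: "1 - p \<in> projs A" using proj_comp p q by blast+
  have U: "u \<in> projs A" "u * p = u" "p * u = u" "u * q = u" "q * u = u"
    using meetD[OF p q] unfolding u_def by blast+
  have V: "v \<in> projs A" "v * p = v" "p * v = v" "v * (1 - q) = v" "(1 - q) * v = v"
    using meetD[OF p cq] unfolding v_def by blast+
  have W: "w \<in> projs A" "w * (1 - p) = w" "(1 - p) * w = w" "w * q = w" "q * w = w"
    using meetD[OF cp q] unfolding w_def by blast+
  have Z: "z \<in> projs A" "z * (1 - p) = z" "(1 - p) * z = z" "z * (1 - q) = z" "(1 - q) * z = z"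
    using meetD[OF cp cq] unfolding z_def by blast+
  have vq: "v * q = 0" "q * v = 0" using V(4,5) by (simp_all add: algebra_simps)
  have wp: "w * p = 0" "p * w = 0" using W(2,3) by (simp_all add: algebra_simps)
  have zp: "z * p = 0" "p * z = 0" using Z(2,3) by (simp_all add: algebra_simps)
  have zq: "z * q = 0" "q * z = 0" using Z(4,5) by (simp_all add: algebra_simps)
  have j1: "pjoin A Pos p q = 1 - z" using pjoin_eq_dm[OF p q] unfolding z_def by simp
  have j2: "pjoin A Pos p (1 - q) = 1 - w" using pjoin_eq_dm[OF p cq] unfolding w_def by simp
  have j3: "pjoin A Pos (1 - p) q = 1 - v" using pjoin_eq_dm[OF cp q] unfolding v_def by simp
  have j4: "pjoin A Pos (1 - p) (1 - q) = 1 - u" using pjoin_eq_dm[OF cp cq] unfolding u_def by simp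
  have vu: "v * u = 0" by (metis U(5) vq(1) mult.assoc mult_zero_left)
  have uv: "u * v = 0" by (metis U(4) vq(2) mult.assoc mult_zero_right)
  have m1: "pmeet A Pos (1 - v) (1 - u) = 1 - (v + u)" using pmeet_orth[OF V(1) U(1) vu uv] .
  have VU: "v + u \<in> projs A" using orth_sum_proj[OF V(1) U(1) vu uv] .
  have VUp: "(v + u) * p = v + u" "p * (v + u) = v + u" using U V by (simp_all add: algebra_simps)
  have o1: "w * (v + u) = 0" by (metis VUp(2) wp(1) mult.assoc mult_zero_left)
  have o2: "(v + u) * w = 0" by (metis VUp(1) wp(2) mult.assoc mult_zero_right)
  have m2: "pmeet A Pos (1 - w) (1 - (v + u)) = 1 - (w + (v + u))" using pmeet_orth[OF W(1) VU o1 o2] .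
  have WVU: "w + (v + u) \<in> projs A" using orth_sum_proj[OF W(1) VU o1 o2] .
  have zw: "z * w = 0" by (metis W(5) zq(1) mult.assoc mult_zero_left)
  have wz: "w * z = 0" by (metis W(4) zq(2) mult.assoc mult_zero_right)
  have zvu: "z * (v + u) = 0" by (metis VUp(2) zp(1) mult.assoc mult_zero_left)
  have vuz: "(v + u) * z = 0" by (metis VUp(1) zp(2) mult.assoc mult_zero_right)
  have o3: "z * (w + (v + u)) = 0" using zw zvu by (simp add: distrib_left)
  have o4: "(w + (v + u)) * z = 0" using wz vuz by (simp add: distrib_right)
  have m3: "pmeet A Pos (1 - z) (1 - (w + (v + u))) = 1 - (z + (w + (v + u)))"
    using pmeet_orth[OF Z(1) WVU o3 o4] .
  have "pmeet A Pos (pjoin A Pos p q) (pmeet A Pos (pjoin A Pos p (1 - q))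
                 (pmeet A Pos (pjoin A Pos (1 - p) q) (pjoin A Pos (1 - p) (1 - q))))
      = 1 - (z + (w + (v + u)))" using j1 j2 j3 j4 m1 m2 m3 by simp
  also have "\<dots> = (p - (v + u)) + ((1 - p) - (z + w))" by (simp add: algebra_simps)
  finally show ?thesis unfolding u_def v_def w_def z_def .
qed

end

theorem theorem3p3:
  fixes A Pos :: "'r::real_algebra_1 set" and p q :: 'r
  assumes SA: "synaptic_algebra A Pos"
    and hp: "p \<in> projs A" and hq: "q \<in> projs A"
  defines "rp \<equiv> pmeet A Pos p (pmeet A Pos (pjoin A Pos (pcomp p) q) (pjoin A Pos (pcomp p) (pcomp q)))"
    and "rpc \<equiv> pmeet A Pos (pcomp p) (pmeet A Pos (pjoin A Pos p q) (pjoin A Pos p (pcomp q)))"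
    and "rq \<equiv> pmeet A Pos q (pmeet A Pos (pjoin A Pos p (pcomp q)) (pjoin A Pos (pcomp p) (pcomp q)))"
    and "rqc \<equiv> pmeet A Pos (pcomp q) (pmeet A Pos (pjoin A Pos p q) (pjoin A Pos (pcomp p) q))"
    and "bpq \<equiv> pmeet A Pos (pjoin A Pos p q) (pmeet A Pos (pjoin A Pos p (pcomp q))
                 (pmeet A Pos (pjoin A Pos (pcomp p) q) (pjoin A Pos (pcomp p) (pcomp q))))"
  shows "((rp = 0 \<or> rpc = 0 \<or> rq = 0 \<or> rqc = 0)
            \<longleftrightarrow> (rp = 0 \<and> rpc = 0 \<and> rq = 0 \<and> rqc = 0))
       \<and> ((rp = 0 \<and> rpc = 0 \<and> rq = 0 \<and> rqc = 0)
            \<longleftrightarrow> (commutes p q \<or> commutes p (pcomp q) \<or> commutes (pcomp p) q \<or> commutes (pcomp p) (pcomp q)))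
       \<and> ((commutes p q \<or> commutes p (pcomp q) \<or> commutes (pcomp p) q \<or> commutes (pcomp p) (pcomp q))
            \<longleftrightarrow> (commutes p q \<and> commutes p (pcomp q) \<and> commutes (pcomp p) q \<and> commutes (pcomp p) (pcomp q)))
       \<and> ((commutes p q \<and> commutes p (pcomp q) \<and> commutes (pcomp p) q \<and> commutes (pcomp p) (pcomp q))
            \<longleftrightarrow> bpq = 0)"
proof -
  interpret sa A Pos using SA by (rule sa.intro)
  have cp: "1 - p \<in> projs A" and cq: "1 - q \<in> projs A" using proj_comp hp hq by blast+
  have c1: "commutes p (1 - q) \<longleftrightarrow> commutes p q" "commutes (1 - p) q \<longleftrightarrow> commutes p q"
    "commutes (1 - p) (1 - q) \<longleftrightarrow> commutes p q" using comm_comp by auto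
  have e1: "rp = 0 \<longleftrightarrow> commutes p q" unfolding rp_def pcomp_def using rp_iff[OF hp hq] .
  have pp: "1 - (1 - p) = p" and qq: "1 - (1 - q) = q" by simp_all
  have e2: "rpc = 0 \<longleftrightarrow> commutes p q" unfolding rpc_def pcomp_def
    using rp_iff[OF cp hq] c1(2) unfolding pp by blast
  have j1: "pjoin A Pos p (1 - q) = pjoin A Pos (1 - q) p" by (rule pjoin_comm)
  have j2: "pjoin A Pos (1 - p) (1 - q) = pjoin A Pos (1 - q) (1 - p)" by (rule pjoin_comm)
  have j3: "pjoin A Pos p q = pjoin A Pos q p" by (rule pjoin_comm)
  have j4: "pjoin A Pos (1 - p) q = pjoin A Pos q (1 - p)" by (rule pjoin_comm)
  have e3: "rq = 0 \<longleftrightarrow> commutes p q" unfolding rq_def pcomp_def j1 j2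
    using rp_iff[OF hq hp] comm_comp(3)[of q p] by blast
  have X4: "pmeet A Pos (1 - q) (pmeet A Pos (pjoin A Pos q p) (pjoin A Pos q (1 - p))) = 0
      \<longleftrightarrow> commutes (1 - q) p" using rp_iff[OF cq hp] by (simp only: qq)
  have X5: "commutes (1 - q) p \<longleftrightarrow> commutes p q" using comm_comp(1)[of q p] comm_comp(3)[of q p] by (rule trans)
  have e4: "rqc = 0 \<longleftrightarrow> commutes p q" unfolding rqc_def pcomp_def j3 j4
    using X4 X5 by (rule trans)
  define r1 where "r1 = p - (pmeet A Pos p (1 - q) + pmeet A Pos p q)"
  define r2 where "r2 = (1 - p) - (pmeet A Pos (1 - p) (1 - q) + pmeet A Pos (1 - p) q)"
  have b: "bpq = r1 + r2" unfolding bpq_def pcomp_def r1_def r2_def using b_formula[OF hp hq] .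
  have r1z: "r1 = 0 \<longleftrightarrow> commutes p q" unfolding r1_def using rp_zero_iff[OF hp hq] .
  have r2z: "r2 = 0 \<longleftrightarrow> commutes p q" unfolding r2_def using rp_zero_iff[OF cp hq] c1(2) by blast
  have r1P: "r1 \<in> Pos" unfolding r1_def using r_proj[OF hp hq] .
  have r2P: "r2 \<in> Pos" unfolding r2_def using r_proj[OF cp hq] .
  have e5: "bpq = 0 \<longleftrightarrow> commutes p q"
  proof
    assume "bpq = 0"
    then have "r1 + r2 = 0" using b by simp
    then have "r1 = 0" using sum_pos_zero[OF r1P r2P] by blast
    then show "commutes p q" using r1z by blast
  next
    assume c: "commutes p q"
    have "r1 = 0" using r1z c by blast
    moreover have "r2 = 0" using r2z c by blast
    ultimately show "bpq = 0" using b by simp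
  qed
  show ?thesis unfolding pcomp_def using e1 e2 e3 e4 e5 c1 by (simp only:) blast
qed

end
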